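(* Let $B$ be a C*-algebra and let $A$ be a regular subalgebra of $B$ satisfying the ideal intersection property. Let $\mathscr{R}(B)$ be the family of all regular ideals of $B$, and $\mathscr{R}'_{\mathrm{inv}}(A)$ the family of all regular, normalizer-invariant ideals of $A$. Then the map $$\alpha: J\in\mathscr{R}(B)\mapsto J\cap A\in\mathscr{R}'_{\mathrm{inv}}(A)$$ is well defined and is a boolean algebra isomorphism (an inclusion-preserving bijection with inclusion-preserving inverse), with inverse $$\beta: I\in\mathscr{R}'_{\mathrm{inv}}(A)\mapsto \mathrm{Ann}_B(\mathrm{Ann}_B(I))\in\mathscr{R}(B).$$
   Context: Ideals are closed two-sided ideals. $A\subseteq B$ is a closed *-subalgebra. A normalizer of $A$ in $B$ is $n\in B$ with $n^*An\subseteq A$ and $nAn^*\subseteq A$; $A$ is a regular subalgebra if the normalizers span a dense subspace of $B$ and $A$ contains an approximate unit for $B$. A subset $S\subseteq A$ is normalizer-invariant if $nSn^*\subseteq S$ for every normalizer $n$. For a C*-algebra $C$ and $S\subseteq C$ with $[SC]=[CS]$ ($[\cdot]$ = closed linear span), $\{x\in C: xs=0\ \forall s\in S\}=\{x\in C: sx=0\ \forall s\in S\}$, denoted $\mathrm{Ann}_C(S)$; this applies in particular to every ideal of $C$, and (for $C=B$) to every normalizer-invariant ideal of $A$. An ideal $J$ of $C$ is regular if $\mathrm{Ann}_C(\mathrm{Ann}_C(J))=J$. Regular ideals form a boolean algebra ordered by inclusion, with meet $J_1\cap J_2$, join $\mathrm{Ann}_C(\mathrm{Ann}_C(J_1+J_2))$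 and negation $\mathrm{Ann}_C(J)$. $A$ satisfies the ideal intersection property if $J\cap A\neq\{0\}$ for every nonzero ideal $J$ of $B$. *)

theory Defs
  imports "HOL-Analysis.Analysis"
begin

text \<open>A (possibly non-unital) C*-algebra: a real Banach algebra with a compatible
  complex scalar multiplication and an isometric-type involution satisfying the C*-identity.\<close>
class cstar_algebra = real_normed_algebra + banach +
  fixes cscale :: "complex \<Rightarrow> 'a \<Rightarrow> 'a"
    and cstar :: "'a \<Rightarrow> 'a"
  assumes cscale_add_right: "cscale c (x + y) = cscale c x + cscale c y"
    and cscale_add_left: "cscale (c + d) x = cscale c x + cscale d x"
    and cscale_cscale: "cscale c (cscale d x) = cscale (c * d) x"
    and cscale_one: "cscale 1 x = x"
    and cscale_of_real: "cscale (complex_of_real r) x = scaleR r x"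
    and norm_cscale: "norm (cscale c x) = cmod c * norm x"
    and cscale_left_mult: "cscale c x * y = cscale c (x * y)"
    and cscale_right_mult: "x * cscale c y = cscale c (x * y)"
    and cstar_cstar: "cstar (cstar x) = x"
    and cstar_add: "cstar (x + y) = cstar x + cstar y"
    and cstar_cscale: "cstar (cscale c x) = cscale (cnj c) (cstar x)"
    and cstar_mult: "cstar (x * y) = cstar y * cstar x"
    and cstar_identity: "norm (cstar x * x) = norm x * norm x"


definition cspan :: "('a::cstar_algebra) set \<Rightarrow> 'a set" where
  "cspan S = {x. \<exists>F c. finite F \<and> F \<subseteq> S \<and> x = (\<Sum>s\<in>F. cscale (c s) s)}"

definition cstar_subalgebra :: "('a::cstar_algebra) set \<Rightarrow> bool" where
  "cstar_subalgebra A \<longleftrightarrow> closed A \<and> 0 \<in> A \<and>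
     (\<forall>x\<in>A. \<forall>y\<in>A. x + y \<in> A \<and> x * y \<in> A) \<and>
     (\<forall>c. \<forall>x\<in>A. cscale c x \<in> A) \<and> (\<forall>x\<in>A. cstar x \<in> A)"

definition ideal_of :: "('a::cstar_algebra) set \<Rightarrow> ('a::cstar_algebra) set \<Rightarrow> bool" where
  "ideal_of C J \<longleftrightarrow> J \<subseteq> C \<and> closed J \<and> 0 \<in> J \<and>
     (\<forall>x\<in>J. \<forall>y\<in>J. x + y \<in> J) \<and> (\<forall>c. \<forall>x\<in>J. cscale c x \<in> J) \<and>
     (\<forall>c\<in>C. \<forall>x\<in>J. c * x \<in> J \<and> x * c \<in> J)"

definition Ann :: "('a::cstar_algebra) set \<Rightarrow> ('a::cstar_algebra) set \<Rightarrow> 'a set" where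
  "Ann C S = {x \<in> C. \<forall>s\<in>S. x * s = 0}"

definition regular_ideal :: "('a::cstar_algebra) set \<Rightarrow> ('a::cstar_algebra) set \<Rightarrow> bool" where
  "regular_ideal C J \<longleftrightarrow> ideal_of C J \<and> Ann C (Ann C J) = J"

definition normalizer :: "('a::cstar_algebra) set \<Rightarrow> ('a::cstar_algebra) set \<Rightarrow> 'a \<Rightarrow> bool" where
  "normalizer A B n \<longleftrightarrow> n \<in> B \<and> (\<forall>a\<in>A. cstar n * a * n \<in> A \<and> n * a * cstar n \<in> A)"

definition normalizer_invariant :: "('a::cstar_algebra) set \<Rightarrow> ('a::cstar_algebra) set \<Rightarrow> ('a::cstar_algebra) set \<Rightarrow> bool" where
  "normalizer_invariant A B S \<longleftrightarrow> (\<forall>n. normalizer A B n \<longrightarrow> (\<forall>s\<in>S. n * s * cstar n \<in> S))"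

definition positive :: "('a::cstar_algebra) \<Rightarrow> bool" where
  "positive e \<longleftrightarrow> (\<exists>x. e = cstar x * x)"

text \<open>A contains an approximate unit for B: a net (here: a proper filter on the
  algebra, i.e. the push-forward of a net) of positive contractions in A with
  e b \<rightarrow> b and b e \<rightarrow> b for all b in B.\<close>
definition contains_approx_unit :: "('a::cstar_algebra) set \<Rightarrow> ('a::cstar_algebra) set \<Rightarrow> bool" where
  "contains_approx_unit A B \<longleftrightarrow> (\<exists>F :: 'a filter. F \<noteq> bot \<and>
     eventually (\<lambda>e. e \<in> A \<and> positive e \<and> norm e \<le> 1) F \<and>
     (\<forall>b\<in>B. ((\<lambda>e. e * b) \<longlongrightarrow> b) F \<and> ((\<lambda>e. b * e) \<longlongrightarrow> b) F))"

definition regular_subalgebra :: "('a::cstar_algebra) set \<Rightarrow> ('a::cstar_algebra) set \<Rightarrow> bool" where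
  "regular_subalgebra A B \<longleftrightarrow> cstar_subalgebra A \<and> A \<subseteq> B \<and>
     closure (cspan {n. normalizer A B n}) = B \<and> contains_approx_unit A B"

definition ideal_intersection_property :: "('a::cstar_algebra) set \<Rightarrow> ('a::cstar_algebra) set \<Rightarrow> bool" where
  "ideal_intersection_property A B \<longleftrightarrow>
     (\<forall>J. ideal_of B J \<and> J \<noteq> {0} \<longrightarrow> J \<inter> A \<noteq> {0})"

end

theory Submission
  imports Defs
begin

lemma cscale_zero_right[simp]: "cscale c (0::'a::cstar_algebra) = 0"
proof -
  have "cscale c (0::'a) = cscale c 0 + cscale c 0" using cscale_add_right[of c 0 0] by simp
  then show ?thesis by simp
qed

lemma cstar_zero[simp]: "cstar (0::'a::cstar_algebra) = 0"
proof -
  have "cstar (0::'a) = cstar 0 + cstar 0" using cstar_add[of 0 0] by simp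
  then show ?thesis by simp
qed

lemma cstar_mult_self_zero: "cstar y * (y::'a::cstar_algebra) = 0 \<Longrightarrow> y = 0"
  using cstar_identity[of y] by simp

lemma mult_cstar_self_zero: "(y::'a::cstar_algebra) * cstar y = 0 \<Longrightarrow> y = 0"
  using cstar_mult_self_zero[of "cstar y"] by (metis cstar_cstar cstar_zero)

lemma sa_sq_zero: "cstar w = w \<Longrightarrow> w * (w::'a::cstar_algebra) = 0 \<Longrightarrow> w = 0"
  using cstar_mult_self_zero[of w] by simp

lemma star_star_zero:
  "(cstar z * z) * (cstar z * z) = (0::'a::cstar_algebra) \<Longrightarrow> z = 0"
  using sa_sq_zero[of "cstar z * z"] cstar_mult_self_zero[of z]
  by (simp add: cstar_mult cstar_cstar)

lemma Ann_antimono: "S \<subseteq> T \<Longrightarrow> Ann C T \<subseteq> Ann C S"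
  unfolding Ann_def by auto

lemma closed_Ann_UNIV: "closed (Ann UNIV (S::'a::cstar_algebra set))"
proof -
  have "Ann UNIV S = (\<Inter>s\<in>S. {x. x * s = 0})" unfolding Ann_def by auto
  moreover have "closed {x. x * s = (0::'a)}" for s
    by (intro closed_Collect_eq continuous_intros)
  ultimately show ?thesis by auto
qed

lemma Ann_ideal:
  assumes "ideal_of UNIV (J::'a::cstar_algebra set)"
  shows "ideal_of UNIV (Ann UNIV J)"
proof -
  have a: "x + y \<in> Ann UNIV J" if "x \<in> Ann UNIV J" "y \<in> Ann UNIV J" for x y
    using that unfolding Ann_def by (simp add: distrib_right)
  have b: "cscale c x \<in> Ann UNIV J" if "x \<in> Ann UNIV J" for c x
    using that unfolding Ann_def by (simp add: cscale_left_mult)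
  have c1: "c * x \<in> Ann UNIV J" if x: "x \<in> Ann UNIV J" for c x
    using x unfolding Ann_def by (simp add: mult.assoc)
  have c2: "x * c \<in> Ann UNIV J" if x: "x \<in> Ann UNIV J" for c x
  proof -
    have "x * c * s = 0" if "s \<in> J" for s
    proof -
      have "c * s \<in> J" using assms that unfolding ideal_of_def by blast
      then show ?thesis using x unfolding Ann_def by (simp add: mult.assoc)
    qed
    then show ?thesis unfolding Ann_def by auto
  qed
  have "0 \<in> Ann UNIV J" unfolding Ann_def by simp
  then show ?thesis unfolding ideal_of_def using a b c1 c2 closed_Ann_UNIV by simp
qed

lemma Ann_comm:
  assumes J: "ideal_of UNIV (J::'a::cstar_algebra set)" and x: "x \<in> Ann UNIV J" and j: "j \<in> J"
  shows "j * x = 0"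
proof -
  let ?z = "j * x"
  have zJ: "?z \<in> J" using J j unfolding ideal_of_def by blast
  have zA: "?z * s = 0" if "s \<in> J" for s using x that unfolding Ann_def by (simp add: mult.assoc)
  have wJ: "cstar ?z * ?z \<in> J" using J zJ unfolding ideal_of_def by blast
  have "(cstar ?z * ?z) * (cstar ?z * ?z) = 0"
    using zA[OF wJ] by (simp add: mult.assoc)
  then show ?thesis by (rule star_star_zero)
qed

lemma subset_AnnAnn:
  assumes "ideal_of UNIV (J::'a::cstar_algebra set)"
  shows "J \<subseteq> Ann UNIV (Ann UNIV J)"
  using Ann_comm[OF assms] unfolding Ann_def[of UNIV "Ann UNIV J"] by auto

lemma AnnAnn_regular:
  assumes "ideal_of UNIV (J::'a::cstar_algebra set)"
  shows "regular_ideal UNIV (Ann UNIV (Ann UNIV J))"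
proof -
  let ?M = "Ann UNIV J"
  have M: "ideal_of UNIV ?M" using Ann_ideal[OF assms] .
  have MM: "ideal_of UNIV (Ann UNIV ?M)" using Ann_ideal[OF M] .
  have "Ann UNIV (Ann UNIV (Ann UNIV ?M)) \<subseteq> Ann UNIV ?M"
    by (rule Ann_antimono[OF subset_AnnAnn[OF M]])
  moreover have "Ann UNIV ?M \<subseteq> Ann UNIV (Ann UNIV (Ann UNIV ?M))"
    by (rule subset_AnnAnn[OF MM])
  ultimately show ?thesis unfolding regular_ideal_def using MM by blast
qed

lemma Ann_norm_zero:
  assumes A: "cstar_subalgebra A" and I: "ideal_of A I" and inv: "normalizer_invariant A UNIV I"
    and x: "x \<in> Ann UNIV I" and i: "i \<in> I" and n: "normalizer A UNIV n"
  shows "x * n * i = 0"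
proof -
  have iA: "i \<in> A" using I i unfolding ideal_of_def by blast
  have "cstar i \<in> A" using A iA unfolding cstar_subalgebra_def by blast
  then have ii: "i * cstar i \<in> I" using I i unfolding ideal_of_def by blast
  have "n * (i * cstar i) * cstar n \<in> I" using inv n ii unfolding normalizer_invariant_def by blast
  then have "x * (n * (i * cstar i) * cstar n) = 0" using x unfolding Ann_def by blast
  moreover have "(x * n * i) * cstar (x * n * i) = (x * (n * (i * cstar i) * cstar n)) * cstar x"
    by (simp add: cstar_mult mult.assoc)
  ultimately have "(x * n * i) * cstar (x * n * i) = 0" by simp
  then show ?thesis by (rule mult_cstar_self_zero)
qed

lemma Ann_all_zero:
  assumes A: "cstar_subalgebra A" and dense: "closure (cspan {n. normalizer A UNIV n}) = UNIV"
    and I: "ideal_of A I" and inv: "normalizer_invariant A UNIV I"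
    and x: "x \<in> Ann UNIV I" and i: "i \<in> I"
  shows "x * b * i = 0"
proof -
  let ?S = "{b. x * b * i = 0}"
  have cl: "closed ?S" by (intro closed_Collect_eq continuous_intros)
  have "cspan {n. normalizer A UNIV n} \<subseteq> ?S"
  proof
    fix y assume "y \<in> cspan {n. normalizer A UNIV n}"
    then obtain F c where F: "finite F" "F \<subseteq> {n. normalizer A UNIV n}"
      and y: "y = (\<Sum>s\<in>F. cscale (c s) s)" unfolding cspan_def by blast
    have "x * y * i = (\<Sum>s\<in>F. cscale (c s) (x * s * i))"
      unfolding y by (simp add: sum_distrib_left sum_distrib_right cscale_left_mult cscale_right_mult)
    also have "\<dots> = 0"
      using F Ann_norm_zero[OF A I inv x i] by (intro sum.neutral) auto
    finally show "y \<in> ?S" by simp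
  qed
  then have "closure (cspan {n. normalizer A UNIV n}) \<subseteq> ?S"
    using cl by (rule closure_minimal)
  then show ?thesis using dense by auto
qed

lemma Ann_inv_ideal:
  assumes A: "cstar_subalgebra A" and dense: "closure (cspan {n. normalizer A UNIV n}) = UNIV"
    and I: "ideal_of A I" and inv: "normalizer_invariant A UNIV I"
  shows "ideal_of UNIV (Ann UNIV I)"
proof -
  have a: "x + y \<in> Ann UNIV I" if "x \<in> Ann UNIV I" "y \<in> Ann UNIV I" for x y
    using that unfolding Ann_def by (simp add: distrib_right)
  have b: "cscale c x \<in> Ann UNIV I" if "x \<in> Ann UNIV I" for c x
    using that unfolding Ann_def by (simp add: cscale_left_mult)
  have c1: "c * x \<in> Ann UNIV I" if x: "x \<in> Ann UNIV I" for c x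
    using x unfolding Ann_def by (simp add: mult.assoc)
  have c2: "x * c \<in> Ann UNIV I" if x: "x \<in> Ann UNIV I" for c x
    using Ann_all_zero[OF A dense I inv x] unfolding Ann_def by auto
  have "0 \<in> Ann UNIV I" unfolding Ann_def by simp
  then show ?thesis unfolding ideal_of_def using a b c1 c2 closed_Ann_UNIV by simp
qed

lemma Int_A_ideal:
  assumes A: "cstar_subalgebra A" and J: "ideal_of UNIV J"
  shows "ideal_of A (J \<inter> A)" and "normalizer_invariant A UNIV (J \<inter> A)"
proof -
  show "ideal_of A (J \<inter> A)"
    using A J unfolding ideal_of_def cstar_subalgebra_def by (auto intro: closed_Int)
  show "normalizer_invariant A UNIV (J \<inter> A)"
    using J unfolding normalizer_invariant_def normalizer_def ideal_of_def by auto
qed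

lemma IIP_claim:
  assumes A: "cstar_subalgebra A" and dense: "closure (cspan {n. normalizer A UNIV n}) = UNIV"
    and iip: "ideal_intersection_property A UNIV" and J: "ideal_of UNIV J"
  shows "Ann UNIV (J \<inter> A) = Ann UNIV J"
proof
  show "Ann UNIV J \<subseteq> Ann UNIV (J \<inter> A)" by (rule Ann_antimono) auto
  let ?L = "Ann UNIV (J \<inter> A)"
  have L: "ideal_of UNIV ?L" using Ann_inv_ideal[OF A dense Int_A_ideal[OF A J]] .
  let ?K = "?L \<inter> J"
  have K: "ideal_of UNIV ?K" using L J unfolding ideal_of_def by (auto intro: closed_Int)
  have "?K \<inter> A \<subseteq> {0}"
  proof
    fix z assume z: "z \<in> ?K \<inter> A"
    have "cstar z \<in> A" using A z unfolding cstar_subalgebra_def by blast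
    moreover have "cstar z * z \<in> J" using J z unfolding ideal_of_def by blast
    ultimately have w: "cstar z * z \<in> J \<inter> A" using A z unfolding cstar_subalgebra_def by blast
    have "z * (cstar z * z) = 0" using z w unfolding Ann_def by blast
    then have "(cstar z * z) * (cstar z * z) = 0" by (simp add: mult.assoc)
    then have "z = 0" by (rule star_star_zero)
    then show "z \<in> {0}" by simp
  qed
  moreover have "0 \<in> ?K \<inter> A" using K A unfolding ideal_of_def cstar_subalgebra_def by simp
  ultimately have "?K \<inter> A = {0}" by blast
  moreover have "ideal_of UNIV ?K \<and> ?K \<noteq> {0} \<longrightarrow> ?K \<inter> A \<noteq> {0}"
    using iip unfolding ideal_intersection_property_def by blast
  ultimately have "?K = {0}" using K by blast
  show "?L \<subseteq> Ann UNIV J"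
  proof
    fix x assume x: "x \<in> ?L"
    have "x * j = 0" if j: "j \<in> J" for j
    proof -
      have "x * j \<in> ?L" using L x unfolding ideal_of_def by blast
      moreover have "x * j \<in> J" using J j unfolding ideal_of_def by blast
      ultimately show ?thesis using \<open>?K = {0}\<close> by blast
    qed
    then show "x \<in> Ann UNIV J" unfolding Ann_def by blast
  qed
qed

lemma Ann_regular:
  assumes M: "ideal_of UNIV (M::'a::cstar_algebra set)"
  shows "regular_ideal UNIV (Ann UNIV M)"
proof -
  have MM: "ideal_of UNIV (Ann UNIV M)" using Ann_ideal[OF M] .
  have "Ann UNIV (Ann UNIV (Ann UNIV M)) \<subseteq> Ann UNIV M"
    by (rule Ann_antimono[OF subset_AnnAnn[OF M]])
  moreover have "Ann UNIV M \<subseteq> Ann UNIV (Ann UNIV (Ann UNIV M))"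
    by (rule subset_AnnAnn[OF MM])
  ultimately show ?thesis unfolding regular_ideal_def using MM by blast
qed

lemma Ann_A: "Ann A S = A \<inter> Ann UNIV S"
  unfolding Ann_def by auto

theorem corollary4p5:
  fixes A :: "'a::cstar_algebra set"
  assumes "regular_subalgebra A UNIV"
    and "ideal_intersection_property A UNIV"
  defines "RB \<equiv> {J. regular_ideal UNIV J}"
    and "RA \<equiv> {I. regular_ideal A I \<and> normalizer_invariant A UNIV I}"
    and "\<alpha> \<equiv> (\<lambda>J. J \<inter> A)"
    and "\<beta> \<equiv> (\<lambda>I. Ann UNIV (Ann UNIV I))"
  shows "\<alpha> ` RB \<subseteq> RA \<and> \<beta> ` RA \<subseteq> RB \<and> bij_betw \<alpha> RB RA
     \<and> (\<forall>J\<in>RB. \<beta> (\<alpha> J) = J) \<and> (\<forall>I\<in>RA. \<alpha> (\<beta> I) = I)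
     \<and> (\<forall>J1\<in>RB. \<forall>J2\<in>RB. J1 \<subseteq> J2 \<longrightarrow> \<alpha> J1 \<subseteq> \<alpha> J2)
     \<and> (\<forall>I1\<in>RA. \<forall>I2\<in>RA. I1 \<subseteq> I2 \<longrightarrow> \<beta> I1 \<subseteq> \<beta> I2)"
proof -
  have A: "cstar_subalgebra A" and dense: "closure (cspan {n. normalizer A UNIV n}) = UNIV"
    using assms(1) unfolding regular_subalgebra_def by auto
  note iip = assms(2)
  have a: "\<alpha> ` RB \<subseteq> RA"
  proof
    fix I assume "I \<in> \<alpha> ` RB"
    then obtain J where J: "regular_ideal UNIV J" and I: "I = J \<inter> A"
      unfolding RB_def \<alpha>_def by auto
    have Ji: "ideal_of UNIV J" and JJ: "Ann UNIV (Ann UNIV J) = J"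
      using J unfolding regular_ideal_def by auto
    have "Ann A (Ann A (J \<inter> A)) = A \<inter> Ann UNIV (Ann UNIV J \<inter> A)"
      using IIP_claim[OF A dense iip Ji] by (simp add: Ann_A[of A] Int_commute)
    also have "\<dots> = A \<inter> Ann UNIV (Ann UNIV J)"
      using IIP_claim[OF A dense iip Ann_ideal[OF Ji]] by simp
    also have "\<dots> = J \<inter> A" using JJ by auto
    finally show "I \<in> RA" unfolding RA_def regular_ideal_def I
      using Int_A_ideal[OF A Ji] by simp
  qed
  have b: "\<beta> ` RA \<subseteq> RB"
  proof
    fix J assume "J \<in> \<beta> ` RA"
    then obtain I where I: "ideal_of A I" "normalizer_invariant A UNIV I" and J: "J = \<beta> I"
      unfolding RA_def regular_ideal_def by auto
    show "J \<in> RB" unfolding RB_def J \<beta>_def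
      using Ann_regular[OF Ann_inv_ideal[OF A dense I]] by simp
  qed
  have c: "\<forall>J\<in>RB. \<beta> (\<alpha> J) = J"
  proof
    fix J assume "J \<in> RB"
    then have Ji: "ideal_of UNIV J" and JJ: "Ann UNIV (Ann UNIV J) = J"
      unfolding RB_def regular_ideal_def by auto
    show "\<beta> (\<alpha> J) = J" unfolding \<alpha>_def \<beta>_def
      using IIP_claim[OF A dense iip Ji] JJ by simp
  qed
  have d: "\<forall>I\<in>RA. \<alpha> (\<beta> I) = I"
  proof
    fix I assume "I \<in> RA"
    then have I: "ideal_of A I" "normalizer_invariant A UNIV I" and II: "Ann A (Ann A I) = I"
      unfolding RA_def regular_ideal_def by auto
    have M: "ideal_of UNIV (Ann UNIV I)" using Ann_inv_ideal[OF A dense I] .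
    have "I = A \<inter> Ann UNIV (Ann UNIV I \<inter> A)" using II by (simp add: Ann_A[of A] Int_commute)
    also have "\<dots> = A \<inter> Ann UNIV (Ann UNIV I)" using IIP_claim[OF A dense iip M] by simp
    finally show "\<alpha> (\<beta> I) = I" unfolding \<alpha>_def \<beta>_def by auto
  qed
  have bij: "bij_betw \<alpha> RB RA"
    using c d a b by (rule bij_betw_byWitness[where f'=\<beta>])
  have e: "\<forall>J1\<in>RB. \<forall>J2\<in>RB. J1 \<subseteq> J2 \<longrightarrow> \<alpha> J1 \<subseteq> \<alpha> J2"
    unfolding \<alpha>_def by auto
  have f: "\<forall>I1\<in>RA. \<forall>I2\<in>RA. I1 \<subseteq> I2 \<longrightarrow> \<beta> I1 \<subseteq> \<beta> I2"
    unfolding \<beta>_def by (intro ballI impI Ann_antimono)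
  show ?thesis
    apply (intro conjI)
          apply (fact a)
         apply (fact b)
        apply (fact bij)
       apply (fact c)
      apply (fact d)
     apply (fact e)
    apply (fact f)
    done
qed

end
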